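(* Let $\sigma,b$ and $x_0$ be as in the context. For $\delta>0$ and $\phi\in L^2[0,\delta]$ let $x_t(\phi)$ solve $x_t(\phi)=x_0+\int_0^t\sigma(x_s(\phi))\phi_sds+\int_0^tb(x_s(\phi))ds$, $t\in[0,\delta]$, and put $\varepsilon=(\int_0^\delta|\phi_s|^2ds)^{1/2}$. There exist $\delta_*,\varepsilon_*\in1/\mathcal{C}$ and $C\in\mathcal{C}$ such that, whenever $\delta\le\delta_*$ and $\varepsilon\le\varepsilon_*$, \[ \left|x_\delta(\phi)-(x_0+b(x_0)\delta)\right|_{\bar A_\delta(x_0)}\le C(\varepsilon\vee\delta^{1/2}). \]
   Context: $\sigma,b:\mathbb{R}^2\to\mathbb{R}^2$ are $C^3$; $\partial_gf=\sum_ig^i\partial_{x_i}f$, $[f,g]=\partial_gf-\partial_fg$. $\bar A_\delta(x_0)$ is the matrix with columns $\delta^{1/2}(\sigma(x_0)+\delta\partial_b\sigma(x_0))$, $\delta^{3/2}[b,\sigma](x_0)$, and $|\xi|_{\bar A_\delta(x_0)}=|\bar A_\delta(x_0)^{-1}\xi|$. $\lambda(z)$ is the smallest eigenvalue of $A(z)A(z)^T$ with $A(z)$ having columns $\sigma(z),[b,\sigma](z)$; $n(z)=\sum_{k=0}^3\sum_{|\alpha|=k}(|\partial^\alpha b(z)|+|\partial^\alpha\sigma(z)|)$. Local hypotheses: $\lambda(z)\ge\Lambda\in(0,1]$, $n(z)\le N$ ($N\ge1$) for $|z-x_0|<1$; there is a differentiable $\kappa_\sigma$ with $\partial_\sigma\sigma=\kappa_\sigma\sigma$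 and $|\kappa_\sigma|,|\nabla\kappa_\sigma|\le n$. $\mathcal{C}=\{K(N/\Lambda)^q:K,q\ge1\text{ universal}\}$, $1/\mathcal{C}=\{c:1/c\in\mathcal{C}\}$. *)

theory Defs
  imports "HOL-Analysis.Analysis"
begin

definition pd :: "2 \<Rightarrow> (real^2 \<Rightarrow> 'b::real_normed_vector) \<Rightarrow> real^2 \<Rightarrow> 'b" where
  "pd i f x = frechet_derivative f (at x) (axis i 1)"

fun Ck :: "nat \<Rightarrow> (real^2 \<Rightarrow> 'b::real_normed_vector) \<Rightarrow> bool" where
  "Ck 0 f = continuous_on UNIV f"
| "Ck (Suc k) f = ((\<forall>x. f differentiable (at x)) \<and> (\<forall>i. Ck k (pd i f)))"

definition dpart :: "nat \<Rightarrow> nat \<Rightarrow> (real^2 \<Rightarrow> real^2) \<Rightarrow> real^2 \<Rightarrow> real^2" where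
  "dpart a1 a2 f = ((pd 1) ^^ a1) (((pd 2) ^^ a2) f)"

definition nfun :: "(real^2 \<Rightarrow> real^2) \<Rightarrow> (real^2 \<Rightarrow> real^2) \<Rightarrow> real^2 \<Rightarrow> real" where
  "nfun b \<sigma> z = (\<Sum>k\<le>3. \<Sum>a\<le>k. norm (dpart a (k - a) b z) + norm (dpart a (k - a) \<sigma> z))"

definition dirD :: "(real^2 \<Rightarrow> real^2) \<Rightarrow> (real^2 \<Rightarrow> real^2) \<Rightarrow> real^2 \<Rightarrow> real^2" where
  "dirD f g x = (\<Sum>i\<in>UNIV. g x $ i *\<^sub>R pd i f x)"

definition bracket :: "(real^2 \<Rightarrow> real^2) \<Rightarrow> (real^2 \<Rightarrow> real^2) \<Rightarrow> real^2 \<Rightarrow> real^2" where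
  "bracket f g x = dirD f g x - dirD g f x"

definition grad :: "(real^2 \<Rightarrow> real) \<Rightarrow> real^2 \<Rightarrow> real^2" where
  "grad k z = (\<chi> i. pd i k z)"

definition cols :: "real^2 \<Rightarrow> real^2 \<Rightarrow> real^2^2" where
  "cols c1 c2 = (\<chi> i. \<chi> j. if j = 1 then c1 $ i else c2 $ i)"

definition Amat :: "(real^2 \<Rightarrow> real^2) \<Rightarrow> (real^2 \<Rightarrow> real^2) \<Rightarrow> real^2 \<Rightarrow> real^2^2" where
  "Amat \<sigma> b z = cols (\<sigma> z) (bracket b \<sigma> z)"

definition lambda_min :: "real^2^2 \<Rightarrow> real" where
  "lambda_min M = Min {l. \<exists>v. v \<noteq> 0 \<and> M *v v = l *\<^sub>R v}"

definition lam :: "(real^2 \<Rightarrow> real^2) \<Rightarrow> (real^2 \<Rightarrow> real^2) \<Rightarrow> real^2 \<Rightarrow> real" where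
  "lam \<sigma> b z = lambda_min (Amat \<sigma> b z ** transpose (Amat \<sigma> b z))"

definition Abar :: "(real^2 \<Rightarrow> real^2) \<Rightarrow> (real^2 \<Rightarrow> real^2) \<Rightarrow> real \<Rightarrow> real^2 \<Rightarrow> real^2^2" where
  "Abar \<sigma> b \<delta> x0 = cols (sqrt \<delta> *\<^sub>R (\<sigma> x0 + \<delta> *\<^sub>R dirD \<sigma> b x0))
                          ((\<delta> powr (3/2)) *\<^sub>R bracket b \<sigma> x0)"

definition Anorm :: "real^2 \<Rightarrow> real^2^2 \<Rightarrow> real" where
  "Anorm \<xi> M = norm (matrix_inv M *v \<xi>)"

end

theory Submission
  imports Defs
begin

definition det2 :: "real^2 \<Rightarrow> real^2 \<Rightarrow> real" where
  "det2 a c = a$1 * c$2 - c$1 * a$2"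

lemma det_cols: "det (cols u v) = det2 u v"
  by (simp add: det_2 cols_def det2_def)

lemma mv2: "((M::real^2^2) *v v) $ i = M$i$1 * v$1 + M$i$2 * v$2"
  by (simp add: matrix_vector_mult_def sum_2)

lemma lam_det:
  fixes A :: "real^2^2"
  assumes L: "0 < \<Lambda>" "\<Lambda> \<le> lambda_min (A ** transpose A)"
  shows "\<Lambda> \<le> \<bar>det A\<bar>"
proof -
  define M where "M = A ** transpose A"
  define p where "p = M$1$1"
  define r where "r = M$1$2"
  define s where "s = M$2$2"
  have r2: "M$2$1 = r" unfolding r_def M_def
    by (simp add: matrix_matrix_mult_def transpose_def sum_2 mult.commute)
  define disc where "disc = (p - s)^2 + 4 * r^2"
  have dpos: "disc \<ge> 0" unfolding disc_def by simp
  define l1 where "l1 = (p + s - sqrt disc) / 2"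
  define l2 where "l2 = (p + s + sqrt disc) / 2"
  have sq: "sqrt disc * sqrt disc = disc" using dpos by simp
  have root1: "l1 * l1 - (p + s) * l1 + (p * s - r * r) = 0"
    unfolding l1_def using sq by (simp add: disc_def field_simps power2_eq_square)
  let ?S = "{l. \<exists>v. v \<noteq> 0 \<and> M *v v = l *\<^sub>R v}"
  have sub: "?S \<subseteq> {l1, l2}"
  proof
    fix l assume "l \<in> ?S"
    then obtain v where v: "v \<noteq> 0" "M *v v = l *\<^sub>R v" by blast
    have e1: "p * v$1 + r * v$2 = l * v$1"
      using arg_cong[OF v(2), of "\<lambda>u. u$1"] by (simp add: mv2 p_def r_def)
    have e2: "r * v$1 + s * v$2 = l * v$2"
      using arg_cong[OF v(2), of "\<lambda>u. u$2"] by (simp add: mv2 s_def r2)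
    have c1: "((p - l) * (s - l) - r * r) * v$1 = 0"
    proof -
      have "(p - l) * v$1 = - r * v$2" using e1 by (simp add: algebra_simps)
      moreover have "r * v$1 = (l - s) * v$2" using e2 by (simp add: algebra_simps)
      ultimately show ?thesis
        by (smt (verit, ccfv_threshold) mult.assoc mult.commute mult_minus_left right_diff_distrib')
    qed
    have c2: "((p - l) * (s - l) - r * r) * v$2 = 0"
    proof -
      have "(s - l) * v$2 = - r * v$1" using e2 by (simp add: algebra_simps)
      moreover have "r * v$2 = (l - p) * v$1" using e1 by (simp add: algebra_simps)
      ultimately show ?thesis
        by (smt (verit, ccfv_threshold) mult.assoc mult.commute mult_minus_left right_diff_distrib')
    qed
    have "v$1 \<noteq> 0 \<or> v$2 \<noteq> 0" using v(1) by (metis exhaust_2 vec_eq_iff zero_index)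
    then have q: "(p - l) * (s - l) - r * r = 0" using c1 c2 by auto
    have "(2 * l - (p + s))^2 = disc" using q unfolding disc_def by (simp add: power2_eq_square algebra_simps)
    then have "\<bar>2 * l - (p + s)\<bar> = sqrt disc" by (metis real_sqrt_abs)
    then show "l \<in> {l1, l2}" unfolding l1_def l2_def by (auto simp: abs_if split: if_splits)
  qed
  have fin: "finite ?S" using sub finite_subset by blast
  have l1S: "l1 \<in> ?S"
  proof (cases "r = 0")
    case False
    define v :: "real^2" where "v = vector [r, l1 - p]"
    have "v \<noteq> 0" using False unfolding v_def by (metis vector_2(1) zero_index)
    moreover have "M *v v = l1 *\<^sub>R v"
      unfolding vec_eq_iff forall_2 using root1
      by (simp add: mv2 v_def p_def[symmetric] r_def[symmetric] s_def[symmetric] r2 algebra_simps)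
    ultimately show ?thesis by blast
  next
    case True
    then have "sqrt disc = \<bar>p - s\<bar>" unfolding disc_def by simp
    then have l1e: "l1 = min p s" unfolding l1_def by (simp add: abs_if min_def)
    show ?thesis
    proof (cases "p \<le> s")
      case True
      define v :: "real^2" where "v = vector [1, 0]"
      have "v \<noteq> 0" unfolding v_def by (metis vector_2(1) zero_index zero_neq_one)
      moreover have "M *v v = l1 *\<^sub>R v"
        unfolding vec_eq_iff forall_2 using True \<open>r = 0\<close> l1e
        by (simp add: mv2 v_def p_def[symmetric] r_def[symmetric] s_def[symmetric] r2)
      ultimately show ?thesis by blast
    next
      case False
      define v :: "real^2" where "v = vector [0, 1]"
      have "v \<noteq> 0" unfolding v_def by (metis vector_2(2) zero_index zero_neq_one)
      moreover have "M *v v = l1 *\<^sub>R v"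
        unfolding vec_eq_iff forall_2 using False \<open>r = 0\<close> l1e
        by (simp add: mv2 v_def p_def[symmetric] r_def[symmetric] s_def[symmetric] r2)
      ultimately show ?thesis by blast
    qed
  qed
  have "lambda_min M \<le> l1" unfolding lambda_min_def using fin l1S by (rule Min_le)
  then have "\<Lambda> \<le> l1" using L(2) M_def by simp
  moreover have "l1 \<le> l2" unfolding l1_def l2_def using dpos by simp
  moreover have "l1 * l2 = p * s - r * r"
    unfolding l1_def l2_def using sq by (simp add: disc_def field_simps power2_eq_square)
  moreover have "det M = p * s - r * r" using r2 by (simp add: det_2 p_def s_def r_def mult.commute)
  moreover have "det M = det A * det A" unfolding M_def by (simp add: det_mul)
  ultimately have ll: "\<Lambda> \<le> l1" "l1 \<le> l2" "det A * det A = l1 * l2" by auto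
  have "\<Lambda> * \<Lambda> \<le> l1 * l2" using ll L(1) by (intro mult_mono) auto
  then have LL: "\<Lambda> * \<Lambda> \<le> \<bar>det A\<bar> * \<bar>det A\<bar>" using ll(3) by (simp add: abs_mult_self_eq)
  show ?thesis
  proof (rule ccontr)
    assume "\<not> \<Lambda> \<le> \<bar>det A\<bar>"
    then have "\<bar>det A\<bar> * \<bar>det A\<bar> < \<Lambda> * \<Lambda>" using L(1) by (intro mult_strict_mono) auto
    then show False using LL by simp
  qed
qed

lemma matrix_inv_apply:
  fixes A :: "real^2^2"
  assumes "invertible A" "A *v c = w"
  shows "matrix_inv A *v w = c"
proof -
  have "A ** matrix_inv A = mat 1 \<and> matrix_inv A ** A = mat 1"
    using assms(1) unfolding invertible_def matrix_inv_def by (rule someI_ex)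
  then have "matrix_inv A ** A = mat 1" by blast
  then show ?thesis using assms(2) by (metis matrix_vector_mul_assoc matrix_vector_mul_lid)
qed
lemma Ck3_diff: "Ck 3 f \<Longrightarrow> f differentiable (at x)"
  by (simp add: numeral_3_eq_3)

lemma fd_linear:
  assumes "f differentiable (at z)"
  shows "bounded_linear (frechet_derivative f (at z))"
  using assms frechet_derivative_works has_derivative_bounded_linear by blast

lemma fd_expand:
  fixes f :: "real^2 \<Rightarrow> real^2"
  assumes "f differentiable (at z)"
  shows "frechet_derivative f (at z) w = (\<Sum>i\<in>UNIV. w$i *\<^sub>R pd i f z)"
proof -
  interpret L: bounded_linear "frechet_derivative f (at z)" using fd_linear[OF assms] .
  have "w = (\<Sum>i\<in>UNIV. w$i *\<^sub>R axis i 1)"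
    using basis_expansion[of w] by (simp add: scalar_mult_eq_scaleR)
  then have "frechet_derivative f (at z) w = (\<Sum>i\<in>UNIV. frechet_derivative f (at z) (w$i *\<^sub>R axis i 1))"
    by (metis L.sum)
  also have "\<dots> = (\<Sum>i\<in>UNIV. w$i *\<^sub>R pd i f z)"
    by (simp add: L.scaleR pd_def)
  finally show ?thesis .
qed

lemma dirD_fd:
  assumes "f differentiable (at z)"
  shows "dirD f g z = frechet_derivative f (at z) (g z)"
  using fd_expand[OF assms] by (simp add: dirD_def)

lemma fd_bound:
  fixes f :: "real^2 \<Rightarrow> real^2"
  assumes "f differentiable (at z)"
  shows "norm (frechet_derivative f (at z) w) \<le> norm w * (norm (pd 1 f z) + norm (pd 2 f z))"
proof -
  have "norm (frechet_derivative f (at z) w) = norm (w$1 *\<^sub>R pd 1 f z + w$2 *\<^sub>R pd 2 f z)"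
    using fd_expand[OF assms] by (simp add: sum_2)
  also have "\<dots> \<le> \<bar>w$1\<bar> * norm (pd 1 f z) + \<bar>w$2\<bar> * norm (pd 2 f z)"
    by (metis norm_scaleR norm_triangle_ineq real_norm_def)
  also have "\<dots> \<le> norm w * norm (pd 1 f z) + norm w * norm (pd 2 f z)"
    by (intro add_mono mult_right_mono component_le_norm_cart) auto
  finally show ?thesis by (simp add: algebra_simps)
qed

lemma nfun_ge:
  "norm (b z) + norm (\<sigma> z) + norm (pd 1 b z) + norm (pd 1 \<sigma> z) + norm (pd 2 b z) + norm (pd 2 \<sigma> z)
    \<le> nfun b \<sigma> z"
proof -
  have e: "(\<Sum>k\<le>(3::nat). F k) = F 0 + F 1 + F 2 + F 3" for F :: "nat \<Rightarrow> real"
    by (simp add: numeral_3_eq_3 numeral_2_eq_2 atMost_Suc)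
  have e1: "(\<Sum>a\<le>(1::nat). F a) = F 0 + F 1" for F :: "nat \<Rightarrow> real"
    by (simp add: atMost_Suc)
  have nn: "0 \<le> (\<Sum>a\<le>k. norm (dpart a (k - a) b z) + norm (dpart a (k - a) \<sigma> z))" for k
    by (intro sum_nonneg) auto
  show ?thesis
    unfolding nfun_def e e1 using nn[of 2] nn[of 3]
    by (simp add: dpart_def)
qed

definition rot :: "real^2 \<Rightarrow> real^2" where "rot a = vector [- a$2, a$1]"

lemma det2_inner: "det2 a c = inner (rot a) c"
  by (simp add: det2_def rot_def inner_vec_def sum_2 algebra_simps)

lemma norm_rot: "norm (rot a) = norm a"
  by (simp add: norm_eq_sqrt_inner rot_def inner_vec_def sum_2 algebra_simps)

lemma det2_bound: "\<bar>det2 a c\<bar> \<le> norm a * norm c"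
  using Cauchy_Schwarz_ineq2[of "rot a" c] by (simp add: det2_inner norm_rot)

lemma det2_bl: "bounded_linear (det2 a)"
  unfolding det2_inner[abs_def] by (rule bounded_linear_inner_right)

lemma det2_simps:
  "det2 a (c + d) = det2 a c + det2 a d"
  "det2 a (c - d) = det2 a c - det2 a d"
  "det2 a (r *\<^sub>R c) = r * det2 a c"
  "det2 (a + d) c = det2 a c + det2 d c"
  "det2 (r *\<^sub>R a) c = r * det2 a c"
  "det2 a a = 0"
  by (simp_all add: det2_def algebra_simps)

lemma lip_ball:
  fixes f :: "real^2 \<Rightarrow> real^2"
  assumes d: "\<And>z. f differentiable (at z)"
    and B: "\<And>z w. z \<in> ball x0 r \<Longrightarrow> norm (frechet_derivative f (at z) w) \<le> N * norm w"
    and y: "y \<in> ball x0 r" and z: "z \<in> ball x0 r"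
  shows "norm (f y - f z) \<le> N * norm (y - z)"
proof (rule differentiable_bound[of "ball x0 r" f "\<lambda>z. frechet_derivative f (at z)"])
  show "convex (ball x0 r)" by simp
  show "(f has_derivative frechet_derivative f (at x)) (at x within ball x0 r)" for x
    using d frechet_derivative_works has_derivative_at_withinI by blast
  show "onorm (frechet_derivative f (at x)) \<le> N" if "x \<in> ball x0 r" for x
    using B[OF that] by (intro onorm_le) auto
qed (use y z in auto)

lemma mvt_det2:
  fixes f :: "real^2 \<Rightarrow> real^2"
  assumes d: "\<And>z. f differentiable (at z)"
  shows "\<exists>\<theta>\<in>{0<..<1}. det2 a (f (x0 + v)) - det2 a (f x0)
            = det2 a (frechet_derivative f (at (x0 + \<theta> *\<^sub>R v)) v)"
proof -
  let ?q = "\<lambda>\<theta>::real. det2 a (f (x0 + \<theta> *\<^sub>R v))"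
  let ?q' = "\<lambda>\<theta> h. det2 a (frechet_derivative f (at (x0 + \<theta> *\<^sub>R v)) (h *\<^sub>R v))"
  have "(?q has_derivative ?q' \<theta>) (at \<theta> within {0..1})" for \<theta>
  proof -
    have p: "((\<lambda>\<theta>. x0 + \<theta> *\<^sub>R v) has_derivative (\<lambda>h. h *\<^sub>R v)) (at \<theta>)"
      by (auto intro!: derivative_eq_intros)
    have fd: "(f has_derivative frechet_derivative f (at (x0 + \<theta> *\<^sub>R v))) (at (x0 + \<theta> *\<^sub>R v))"
      using d frechet_derivative_works by blast
    have "((f \<circ> (\<lambda>\<theta>. x0 + \<theta> *\<^sub>R v)) has_derivative
        (frechet_derivative f (at (x0 + \<theta> *\<^sub>R v)) \<circ> (\<lambda>h. h *\<^sub>R v))) (at \<theta>)"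
      by (rule diff_chain_at[OF p fd])
    then have "(?q has_derivative ?q' \<theta>) (at \<theta>)"
      using bounded_linear.has_derivative[OF det2_bl[of a]] by (simp add: o_def)
    then show ?thesis by (rule has_derivative_at_withinI)
  qed
  then obtain \<theta> where "\<theta> \<in> {0<..<1}" "?q 1 - ?q 0 = ?q' \<theta> (1 - 0)"
    using mvt_simple[of 0 1 ?q ?q'] by auto
  then show ?thesis by auto
qed

lemma int_bound:
  fixes f :: "real \<Rightarrow> 'a::euclidean_space" and L :: "'a \<Rightarrow> 'b::euclidean_space"
  assumes fi: "(f has_integral y) {0..t}" and L: "bounded_linear L"
    and pb: "\<And>s. s \<in> {0..t} \<Longrightarrow> norm (L (f s)) \<le> A * \<bar>\<phi> s\<bar> + B"
    and ai: "(\<lambda>s. \<bar>\<phi> s\<bar>) integrable_on {0..t}" and a: "integral {0..t} (\<lambda>s. \<bar>\<phi> s\<bar>) \<le> a"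
    and A: "0 \<le> A" and t: "0 \<le> t"
  shows "norm (L y) \<le> A * a + B * t"
proof -
  have Li: "((L \<circ> f) has_integral L y) {0..t}" by (rule has_integral_linear[OF fi L])
  have hi: "((\<lambda>s. A * \<bar>\<phi> s\<bar> + B) has_integral (A * integral {0..t} (\<lambda>s. \<bar>\<phi> s\<bar>) + B * t)) {0..t}"
    using has_integral_add[OF has_integral_mult_right[OF integrable_integral[OF ai], of A] has_integral_const_real[of B 0 t]] t
    by (simp add: content_real mult.commute)
  have "norm (L y) = norm (integral {0..t} (L \<circ> f))" using Li by (simp add: integral_unique)
  also have "\<dots> \<le> integral {0..t} (\<lambda>s. A * \<bar>\<phi> s\<bar> + B)"
    using Li hi pb by (intro integral_norm_bound_integral) (auto simp: has_integral_integrable_integral)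
  also have "\<dots> = A * integral {0..t} (\<lambda>s. \<bar>\<phi> s\<bar>) + B * t"
    using hi by (simp add: integral_unique)
  also have "\<dots> \<le> A * a + B * t" using a A by (simp add: mult_left_mono)
  finally show ?thesis .
qed
lemma phi_absint:
  fixes \<phi> :: "real \<Rightarrow> real"
  assumes "set_borel_measurable lborel {0..d} \<phi>" "(\<lambda>s. (\<phi> s)\<^sup>2) integrable_on {0..d}"
  shows "\<phi> absolutely_integrable_on {0..d}"
proof -
  have "(\<lambda>x. indicator {0..d} x *\<^sub>R \<phi> x) \<in> borel_measurable lborel"
    using assms(1) unfolding set_borel_measurable_def .
  then have "(\<lambda>x. indicator {0..d} x *\<^sub>R \<phi> x) \<in> borel_measurable lebesgue"
    by (rule measurable_completion)
  moreover have "(\<lambda>x. if x \<in> {0..d} then \<phi> x else 0) = (\<lambda>x. indicator {0..d} x *\<^sub>R \<phi> x)"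
    by (auto simp: indicator_def)
  ultimately have m: "\<phi> \<in> borel_measurable (lebesgue_on {0..d})"
    by (intro borel_measurable_if_D) simp
  show ?thesis
  proof (rule measurable_bounded_by_integrable_imp_absolutely_integrable[OF m])
    show "(\<lambda>s. 1/2 + (\<phi> s)\<^sup>2 / 2) integrable_on {0..d}"
      using assms(2) by (intro integrable_add integrable_divide) auto
    show "norm (\<phi> x) \<le> 1/2 + (\<phi> x)\<^sup>2 / 2" for x
    proof -
      have "0 \<le> (\<bar>\<phi> x\<bar> - 1)\<^sup>2" by simp
      then have "0 \<le> (\<phi> x)\<^sup>2 - 2 * \<bar>\<phi> x\<bar> + 1" by (simp add: power2_diff)
      then show ?thesis by simp
    qed
  qed auto
qed

lemma l1_bound:
  fixes \<phi> :: "real \<Rightarrow> real"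
  assumes ai: "(\<lambda>s. \<bar>\<phi> s\<bar>) integrable_on {0..d}" and qi: "(\<lambda>s. (\<phi> s)\<^sup>2) integrable_on {0..d}"
    and d: "0 < d"
  shows "integral {0..d} (\<lambda>s. \<bar>\<phi> s\<bar>)
          \<le> sqrt d * max (sqrt (integral {0..d} (\<lambda>s. (\<phi> s)\<^sup>2))) (sqrt d)"
proof -
  define I where "I = integral {0..d} (\<lambda>s. (\<phi> s)\<^sup>2)"
  define e where "e = sqrt I"
  define m where "m = max e (sqrt d)"
  have I0: "0 \<le> I" unfolding I_def using qi by (intro integral_nonneg) auto
  have eI: "e * e = I" unfolding e_def using I0 by simp
  have sd: "0 < sqrt d" using d by simp
  have mpos: "0 < m" unfolding m_def using sd by linarith
  have em: "e \<le> m" "sqrt d \<le> m" "0 \<le> e" unfolding m_def e_def using I0 by auto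
  define c where "c = sqrt d / m"
  have c: "0 < c" unfolding c_def using sd mpos by simp
  have pw: "\<bar>\<phi> s\<bar> \<le> c / 2 * (\<phi> s)\<^sup>2 + 1 / (2 * c)" for s
  proof -
    have h0: "0 \<le> (c * \<bar>\<phi> s\<bar> - 1)\<^sup>2" by simp
    have "(c * \<bar>\<phi> s\<bar> - 1)\<^sup>2 = c * c * \<bar>\<phi> s\<bar>\<^sup>2 - 2 * c * \<bar>\<phi> s\<bar> + 1"
      by (simp add: power2_eq_square algebra_simps)
    then have h1: "(c * \<bar>\<phi> s\<bar> - 1)\<^sup>2 = c * c * (\<phi> s)\<^sup>2 - 2 * c * \<bar>\<phi> s\<bar> + 1"
      by (simp only: power2_abs)
    from h0 h1 have "2 * c * \<bar>\<phi> s\<bar> \<le> c * c * (\<phi> s)\<^sup>2 + 1" by linarith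
    then show ?thesis using c by (simp add: field_simps)
  qed
  have hi: "((\<lambda>s. c / 2 * (\<phi> s)\<^sup>2 + 1 / (2 * c)) has_integral (c / 2 * I + d * (1 / (2 * c)))) {0..d}"
    using has_integral_add[OF has_integral_mult_right[OF integrable_integral[OF qi], of "c/2"]
        has_integral_const_real[of "1 / (2 * c)" 0 d]] d
    by (simp add: content_real I_def mult.commute)
  have gi: "(\<lambda>s. c / 2 * (\<phi> s)\<^sup>2 + 1 / (2 * c)) integrable_on {0..d}"
    using hi by (rule has_integral_integrable)
  have "integral {0..d} (\<lambda>s. \<bar>\<phi> s\<bar>) \<le> integral {0..d} (\<lambda>s. c / 2 * (\<phi> s)\<^sup>2 + 1 / (2 * c))"
    by (rule integral_le[OF ai gi pw])
  also have "\<dots> = c / 2 * I + d * (1 / (2 * c))"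
    using hi by (rule integral_unique)
  also have "\<dots> = (sqrt d * (e * e) / m + sqrt d * m) / 2"
  proof -
    have "d * (1 / (2 * c)) = sqrt d * m / 2"
      unfolding c_def using sd mpos d by (simp add: field_simps)
    moreover have "c / 2 * I = sqrt d * (e * e) / m / 2"
      unfolding c_def eI[symmetric] using mpos by (simp add: field_simps)
    ultimately show ?thesis by (simp add: field_simps)
  qed
  also have "\<dots> \<le> sqrt d * m"
  proof -
    have "e * e \<le> m * m" using em by (intro mult_mono) auto
    then have "e * e / m \<le> m" using mpos by (simp add: field_simps)
    then have "sqrt d * (e * e / m) \<le> sqrt d * m" using sd by (intro mult_left_mono) auto
    then show ?thesis by (simp add: mult.commute)
  qed
  finally show ?thesis unfolding m_def e_def I_def .
qed
lemma abs_helper: "\<bar>p * (u + v) + q\<bar> \<le> \<bar>p\<bar> * (\<bar>u\<bar> + \<bar>v\<bar>) + \<bar>q::real\<bar>"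
proof -
  have "\<bar>p * (u + v) + q\<bar> \<le> \<bar>p * (u + v)\<bar> + \<bar>q\<bar>" by (rule abs_triangle_ineq)
  also have "\<bar>p * (u + v)\<bar> = \<bar>p\<bar> * \<bar>u + v\<bar>" by (rule abs_mult)
  also have "\<bar>p\<bar> * \<bar>u + v\<bar> \<le> \<bar>p\<bar> * (\<bar>u\<bar> + \<bar>v\<bar>)" by (intro mult_left_mono abs_triangle_ineq) auto
  finally show ?thesis by simp
qed

lemma cramer2:
  fixes u v w :: "real^2"
  assumes "det2 u v \<noteq> 0"
  shows "cols u v *v vector [det2 w v / det2 u v, det2 u w / det2 u v] = w"
proof -
  have two: "(2::2) \<noteq> 1" by simp
  have "u$i * (det2 w v / det2 u v) + v$i * (det2 u w / det2 u v)
        = (u$i * det2 w v + v$i * det2 u w) / det2 u v" for i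
    by (simp add: add_divide_distrib)
  moreover have "u$i * det2 w v + v$i * det2 u w = w$i * det2 u v" if "i = 1 \<or> i = 2" for i
    using that by (auto simp: det2_def algebra_simps)
  ultimately have e: "u$i * (det2 w v / det2 u v) + v$i * (det2 u w / det2 u v) = w$i" if "i = 1 \<or> i = 2" for i
    using assms that by simp
  show ?thesis
    unfolding vec_eq_iff forall_2 mv2 using e two by (simp add: cols_def)
qed
lemma main_est:
  fixes \<sigma> b :: "real^2 \<Rightarrow> real^2" and x0 :: "real^2" and \<kappa> :: "real^2 \<Rightarrow> real"
    and \<phi> :: "real \<Rightarrow> real" and x :: "real \<Rightarrow> real^2" and \<Lambda> N \<delta> :: real
  assumes Cs: "Ck 3 \<sigma>" and Cb: "Ck 3 b" and L0: "0 < \<Lambda>" and L1: "\<Lambda> \<le> 1" and N1: "N \<ge> 1"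
    and hyp: "\<forall>z. dist z x0 < 1 \<longrightarrow> lam \<sigma> b z \<ge> \<Lambda> \<and> nfun b \<sigma> z \<le> N"
    and kap: "\<forall>z. dist z x0 < 1 \<longrightarrow> dirD \<sigma> \<sigma> z = \<kappa> z *\<^sub>R \<sigma> z \<and>
           \<bar>\<kappa> z\<bar> \<le> nfun b \<sigma> z \<and> norm (grad \<kappa> z) \<le> nfun b \<sigma> z"
    and d0: "0 < \<delta>" and dsm: "\<delta> \<le> 1 / (1000 * (N / \<Lambda>) powr 4)"
    and meas: "set_borel_measurable lborel {0..\<delta>} \<phi>"
    and sqi: "(\<lambda>s. (\<phi> s)\<^sup>2) integrable_on {0..\<delta>}"
    and esm: "sqrt (integral {0..\<delta>} (\<lambda>s. (\<phi> s)\<^sup>2)) \<le> 1 / (1000 * (N / \<Lambda>) powr 4)"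
    and sol: "\<forall>t\<in>{0..\<delta>}. ((\<lambda>s. \<phi> s *\<^sub>R \<sigma> (x s) + b (x s)) has_integral (x t - x0)) {0..t}"
  shows "invertible (Abar \<sigma> b \<delta> x0) \<and>
         Anorm (x \<delta> - (x0 + \<delta> *\<^sub>R b x0)) (Abar \<sigma> b \<delta> x0)
           \<le> 1000 * (N / \<Lambda>) powr 4 * max (sqrt (integral {0..\<delta>} (\<lambda>s. (\<phi> s)\<^sup>2))) (sqrt \<delta>)"
proof -
  define e where "e = sqrt (integral {0..\<delta>} (\<lambda>s. (\<phi> s)\<^sup>2))"
  define sd where "sd = sqrt \<delta>"
  define m where "m = max e sd"
  define \<rho> where "\<rho> = 2 * N * sd * m"
  define P where "P = (N / \<Lambda>)^4"
  have P: "(N / \<Lambda>) powr 4 = P" unfolding P_def using powr_realpow[of "N / \<Lambda>" 4] L0 N1 by simp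
  have NL: "1 \<le> N / \<Lambda>" using L0 L1 N1 by (simp add: field_simps)
  have P1: "1 \<le> P" unfolding P_def using NL by (simp add: one_le_power)
  have L4: "\<Lambda>^4 \<le> \<Lambda>"
  proof -
    have "\<Lambda>^3 \<le> 1" using L0 L1 by (simp add: power_le_one)
    then have "\<Lambda> * \<Lambda>^3 \<le> \<Lambda> * 1" using L0 by (intro mult_left_mono) auto
    then show ?thesis by (simp add: power_eq_if eval_nat_numeral)
  qed
  have PN: "N^4 / \<Lambda> \<le> P"
    unfolding P_def power_divide using L0 L4 N1 by (intro divide_left_mono) auto
  have N4: "1 \<le> N^4" using N1 by (simp add: one_le_power)
  have NN4: "N \<le> N^4" "N^2 \<le> N^4" "N^3 \<le> N^4"
    using power_increasing[of 1 4 N] power_increasing[of 2 4 N] power_increasing[of 3 4 N] N1 by simp_all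
  have dN: "\<delta> * N^4 \<le> \<Lambda> / 1000"
  proof -
    have a: "N^4 \<le> P * \<Lambda>" using PN L0 by (simp add: field_simps)
    have "\<delta> * N^4 \<le> (1 / (1000 * P)) * N^4" using dsm P N4 by (intro mult_right_mono) auto
    also have "\<dots> \<le> (1 / (1000 * P)) * (P * \<Lambda>)" using a P1 by (intro mult_left_mono) auto
    also have "\<dots> = \<Lambda> / 1000" using P1 by (simp add: field_simps)
    finally show ?thesis .
  qed
  have dN1: "\<delta> * N^4 \<le> 1 / 1000" using dN L1 by linarith
  have I0: "0 \<le> integral {0..\<delta>} (\<lambda>s. (\<phi> s)\<^sup>2)" by (rule integral_nonneg[OF sqi]) simp
  have e0: "0 \<le> e" unfolding e_def using I0 by simp
  have e1: "e \<le> 1 / 1000"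
  proof -
    have "e \<le> 1 / (1000 * P)" using esm P unfolding e_def by simp
    also have "\<dots> \<le> 1 / 1000" using P1 by (simp add: field_simps)
    finally show ?thesis .
  qed
  have sd0: "0 < sd" unfolding sd_def using d0 by simp
  have sdsd: "sd * sd = \<delta>" unfolding sd_def using d0 by simp
  have "\<delta> * 1 \<le> \<delta> * N^4" using N4 d0 by (intro mult_left_mono) auto
  then have d1: "\<delta> \<le> 1 / 1000" using dN1 by linarith
  have sd1: "sd \<le> 1" unfolding sd_def using d1 by simp
  have sdN: "sd * N \<le> 1 / 30"
  proof (rule ccontr)
    assume "\<not> sd * N \<le> 1 / 30"
    then have "1/30 * (1/30) < (sd * N) * (sd * N)" by (intro mult_strict_mono) auto
    also have "\<dots> = (sd * sd) * (N * N)" by (simp add: algebra_simps)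
    also have "\<dots> = \<delta> * N^2" by (simp add: sdsd power2_eq_square)
    also have "\<dots> \<le> \<delta> * N^4" using NN4 d0 by (intro mult_left_mono) auto
    finally show False using dN1 by simp
  qed
  have m0: "0 < m" "e \<le> m" "sd \<le> m" unfolding m_def using sd0 by auto
  have m1: "m \<le> 1" unfolding m_def using e1 sd1 by auto
  have "sd * sd \<le> sd * m" using m0 sd0 by (intro mult_left_mono) auto
  then have dm: "\<delta> \<le> sd * m" using sdsd by simp
  have \<rho>0: "0 \<le> \<rho>" unfolding \<rho>_def using N1 sd0 m0 by simp
  have \<rho>1: "\<rho> \<le> 1 / 15"
  proof -
    have "\<rho> = 2 * (sd * N) * m" unfolding \<rho>_def by (simp add: algebra_simps)
    also have "\<dots> \<le> 2 * (1/30) * 1" using sdN m1 m0 sd0 N1 by (intro mult_mono) auto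
    finally show ?thesis by simp
  qed
  have \<rho>d: "\<rho> * \<delta> \<le> sd * m"
  proof -
    have "\<rho> * \<delta> \<le> 1 * \<delta>" using \<rho>1 d0 by (intro mult_right_mono) auto
    then show ?thesis using dm by simp
  qed
  have \<rho>sm: "\<rho> * (sd * m) \<le> 2 * N * \<delta>"
  proof -
    have "\<rho> * (sd * m) = 2 * N * (sd * sd) * (m * m)" unfolding \<rho>_def by (simp add: algebra_simps)
    also have "\<dots> \<le> 2 * N * (sd * sd) * (1 * 1)" using m0 m1 N1 sd0 by (intro mult_left_mono mult_mono) auto
    finally show ?thesis using sdsd by simp
  qed
  have dsig: "\<And>z. \<sigma> differentiable (at z)" using Cs by (rule Ck3_diff)
  have db: "\<And>z. b differentiable (at z)" using Cb by (rule Ck3_diff)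
  define Ds where "Ds = (\<lambda>z. frechet_derivative \<sigma> (at z))"
  define Db where "Db = (\<lambda>z. frechet_derivative b (at z))"
  have Dsl: "\<And>z. bounded_linear (Ds z)" unfolding Ds_def using dsig by (rule fd_linear)
  have Dbl: "\<And>z. bounded_linear (Db z)" unfolding Db_def using db by (rule fd_linear)
  have nb: "norm (b z) + norm (\<sigma> z) + norm (pd 1 b z) + norm (pd 1 \<sigma> z)
      + norm (pd 2 b z) + norm (pd 2 \<sigma> z) \<le> N" if "z \<in> ball x0 1" for z
  proof -
    have "dist z x0 < 1" using that by (simp add: dist_commute)
    then have "nfun b \<sigma> z \<le> N" using hyp[rule_format, of z] by simp
    then show ?thesis using nfun_ge[where b=b and \<sigma>=\<sigma> and z=z] by linarith
  qed
  have nb': "norm (\<sigma> z) \<le> N \<and> norm (b z) \<le> N \<and> norm (pd 1 b z) + norm (pd 2 b z) \<le> N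
      \<and> norm (pd 1 \<sigma> z) + norm (pd 2 \<sigma> z) \<le> N" if "z \<in> ball x0 1" for z
    using nb[OF that] norm_ge_zero[of "b z"] norm_ge_zero[of "\<sigma> z"] norm_ge_zero[of "pd 1 b z"]
      norm_ge_zero[of "pd 2 b z"] norm_ge_zero[of "pd 1 \<sigma> z"] norm_ge_zero[of "pd 2 \<sigma> z"]
    by linarith
  have bnd_s: "norm (\<sigma> z) \<le> N" if "z \<in> ball x0 1" for z
    using nb'[OF that] by blast
  have bnd_b: "norm (b z) \<le> N" if "z \<in> ball x0 1" for z
    using nb'[OF that] by blast
  have bnd_Ds: "norm (Ds z w) \<le> N * norm w" if "z \<in> ball x0 1" for z w
  proof -
    have "norm (Ds z w) \<le> norm w * (norm (pd 1 \<sigma> z) + norm (pd 2 \<sigma> z))"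
      unfolding Ds_def using dsig by (rule fd_bound)
    also have "\<dots> \<le> norm w * N" using nb'[OF that] by (intro mult_left_mono) auto
    finally show ?thesis by (simp add: mult.commute)
  qed
  have bnd_Db: "norm (Db z w) \<le> N * norm w" if "z \<in> ball x0 1" for z w
  proof -
    have "norm (Db z w) \<le> norm w * (norm (pd 1 b z) + norm (pd 2 b z))"
      unfolding Db_def using db by (rule fd_bound)
    also have "\<dots> \<le> norm w * N" using nb'[OF that] by (intro mult_left_mono) auto
    finally show ?thesis by (simp add: mult.commute)
  qed
  have kap1: "Ds z (\<sigma> z) = \<kappa> z *\<^sub>R \<sigma> z" "\<bar>\<kappa> z\<bar> \<le> N" if "z \<in> ball x0 1" for z
  proof -
    have "dist z x0 < 1" using that by (simp add: dist_commute)
    then have "dirD \<sigma> \<sigma> z = \<kappa> z *\<^sub>R \<sigma> z" "\<bar>\<kappa> z\<bar> \<le> nfun b \<sigma> z" "nfun b \<sigma> z \<le> N"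
      using kap[rule_format, OF \<open>dist z x0 < 1\<close>] hyp[rule_format, OF \<open>dist z x0 < 1\<close>] by auto
    then show "Ds z (\<sigma> z) = \<kappa> z *\<^sub>R \<sigma> z" "\<bar>\<kappa> z\<bar> \<le> N"
      using dirD_fd[OF dsig] unfolding Ds_def by auto
  qed
  have lip_s: "norm (\<sigma> y - \<sigma> z) \<le> N * norm (y - z)" if "y \<in> ball x0 1" "z \<in> ball x0 1" for y z
    by (rule lip_ball[OF dsig _ that]) (use bnd_Ds in \<open>auto simp: Ds_def\<close>)
  have lip_b: "norm (b y - b z) \<le> N * norm (y - z)" if "y \<in> ball x0 1" "z \<in> ball x0 1" for y z
    by (rule lip_ball[OF db _ that]) (use bnd_Db in \<open>auto simp: Db_def\<close>)
  have x0B: "x0 \<in> ball x0 1" by simp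
  have phiai: "\<phi> absolutely_integrable_on {0..\<delta>}" using meas sqi by (rule phi_absint)
  have absi: "(\<lambda>s. \<bar>\<phi> s\<bar>) integrable_on {0..\<delta>}"
    using phiai unfolding absolutely_integrable_on_def real_norm_def by blast
  have absit: "(\<lambda>s. \<bar>\<phi> s\<bar>) integrable_on {0..t}" if "t \<in> {0..\<delta>}" for t
    by (rule integrable_on_subinterval[OF absi]) (use that in auto)
  have aint: "integral {0..\<delta>} (\<lambda>s. \<bar>\<phi> s\<bar>) \<le> sd * m"
    using l1_bound[OF absi sqi d0] unfolding m_def e_def sd_def .
  have aintt: "integral {0..t} (\<lambda>s. \<bar>\<phi> s\<bar>) \<le> sd * m" if "t \<in> {0..\<delta>}" for t
  proof -
    have "integral {0..t} (\<lambda>s. \<bar>\<phi> s\<bar>) \<le> integral {0..\<delta>} (\<lambda>s. \<bar>\<phi> s\<bar>)"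
      using that by (intro integral_subset_le absit absi) auto
    then show ?thesis using aint by linarith
  qed
  define f where "f = (\<lambda>s. \<phi> s *\<^sub>R \<sigma> (x s) + b (x s))"
  have solf: "(f has_integral (x t - x0)) {0..t}" if "t \<in> {0..\<delta>}" for t
    using sol that unfolding f_def by auto
  have fi: "f integrable_on {0..\<delta>}" using solf[of \<delta>] d0 by (auto intro: has_integral_integrable)
  have x00: "x 0 = x0"
  proof -
    have "(f has_integral (x 0 - x0)) {0}" using solf[of 0] d0 by simp
    then have "x 0 - x0 = 0" by (rule has_integral_unique[OF _ has_integral_refl(2)])
    then show ?thesis by simp
  qed
  have xcont: "continuous_on {0..\<delta>} x"
  proof -
    have "continuous_on {0..\<delta>} (\<lambda>t. x0 + integral {0..t} f)"
      using indefinite_integral_continuous_1[OF fi] by (intro continuous_intros)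
    moreover have "x0 + integral {0..t} f = x t" if "t \<in> {0..\<delta>}" for t
      using integral_unique[OF solf[OF that]] by simp
    ultimately show ?thesis using continuous_on_eq by blast
  qed
  have E1: "norm (x t - x0) \<le> \<rho>" if t: "t \<in> {0..\<delta>}" and inB: "\<forall>s\<in>{0..t}. x s \<in> ball x0 1" for t
  proof -
    have "norm (x t - x0) \<le> N * (sd * m) + N * t"
    proof (rule int_bound[OF solf[OF t] bounded_linear_ident _ absit[OF t] aintt[OF t]])
      fix s assume s: "s \<in> {0..t}"
      have "norm (\<phi> s *\<^sub>R \<sigma> (x s) + b (x s)) \<le> \<bar>\<phi> s\<bar> * norm (\<sigma> (x s)) + norm (b (x s))"
        by (metis norm_scaleR norm_triangle_ineq real_norm_def)
      also have "\<dots> \<le> \<bar>\<phi> s\<bar> * N + N"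
        using bnd_s bnd_b inB s by (intro add_mono mult_left_mono) auto
      finally show "norm (f s) \<le> N * \<bar>\<phi> s\<bar> + N" unfolding f_def by (simp add: mult.commute)
    qed (use N1 t in auto)
    also have "\<dots> \<le> N * (sd * m) + N * (sd * m)" using t dm N1 sd0 m0 by (intro add_mono mult_left_mono) auto
    also have "\<dots> = \<rho>" unfolding \<rho>_def by (simp add: algebra_simps)
    finally show ?thesis by simp
  qed
  have small: "norm (x t - x0) < 1/2" if "t \<in> {0..\<delta>}" for t
  proof (rule ccontr)
    assume "\<not> norm (x t - x0) < 1/2"
    define T where "T = {0..\<delta>} \<inter> (\<lambda>t. norm (x t - x0)) -` {1/2..}"
    have gc: "continuous_on {0..\<delta>} (\<lambda>t. norm (x t - x0))" using xcont by (intro continuous_intros)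
    have "closed T" unfolding T_def using gc by (intro continuous_closed_preimage) auto
    moreover have "{0..\<delta>} \<inter> T = T" unfolding T_def by auto
    ultimately have cT: "compact T" using compact_Int_closed[of "{0..\<delta>}" T] by auto
    have "t \<in> T" unfolding T_def using that \<open>\<not> norm (x t - x0) < 1/2\<close> by auto
    then obtain t1 where t1: "t1 \<in> T" "\<And>y. y \<in> T \<Longrightarrow> t1 \<le> y"
      using compact_attains_inf[OF cT] by blast
    have t1d: "t1 \<in> {0..\<delta>}" "1/2 \<le> norm (x t1 - x0)" using t1(1) unfolding T_def by auto
    have before: "norm (x s - x0) < 1/2" if "s \<in> {0..\<delta>}" "s < t1" for s
      using t1(2)[of s] that unfolding T_def by fastforce
    have t1pos: "0 < t1" using t1d x00 by (cases "t1 = 0") auto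
    have "\<forall>\<epsilon>>0. \<exists>d>0. \<forall>x'\<in>{0..\<delta>}. dist x' t1 < d \<longrightarrow> dist (x x') (x t1) < \<epsilon>"
      using xcont t1d(1) unfolding continuous_on_iff by blast
    from this[rule_format, of "1/4"] obtain \<eta> where
      \<eta>: "\<eta> > 0" "\<And>s. s \<in> {0..\<delta>} \<Longrightarrow> dist s t1 < \<eta> \<Longrightarrow> dist (x s) (x t1) < 1/4"
      by auto
    define s0 where "s0 = max 0 (t1 - \<eta>/2)"
    have s0: "s0 \<in> {0..\<delta>}" "s0 < t1" "dist s0 t1 < \<eta>"
      unfolding s0_def using t1pos \<eta>(1) t1d(1) by (auto simp: dist_real_def max_def)
    have "norm (x t1 - x0) \<le> norm (x s0 - x0) + norm (x t1 - x s0)"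
      using norm_triangle_ineq[of "x s0 - x0" "x t1 - x s0"] by simp
    moreover have "norm (x t1 - x s0) < 1/4" using \<eta>(2)[OF s0(1,3)] by (simp add: dist_norm norm_minus_commute)
    ultimately have "norm (x t1 - x0) < 1/2 + 1/4" using before[OF s0(1,2)] by linarith
    then have at1: "norm (x t1 - x0) < 1" by simp
    have "\<forall>s\<in>{0..t1}. x s \<in> ball x0 1"
    proof
      fix s assume s: "s \<in> {0..t1}"
      show "x s \<in> ball x0 1"
      proof (cases "s = t1")
        case True then show ?thesis using at1 by (simp add: dist_norm norm_minus_commute)
      next
        case False then have "norm (x s - x0) < 1/2" using before s t1d(1) by auto
        then show ?thesis by (simp add: dist_norm norm_minus_commute)
      qed
    qed
    then have "norm (x t1 - x0) \<le> \<rho>" using E1 t1d(1) by blast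
    then show False using t1d(2) \<rho>1 by linarith
  qed
  have xB: "x t \<in> ball x0 1" if "t \<in> {0..\<delta>}" for t
    using small[OF that] by (simp add: dist_norm norm_minus_commute)
  have xr: "norm (x t - x0) \<le> \<rho>" if "t \<in> {0..\<delta>}" for t
    using E1[OF that] xB that by auto
  define \<sigma>0 where "\<sigma>0 = \<sigma> x0"
  have s0N: "norm \<sigma>0 \<le> N" using bnd_s x0B unfolding \<sigma>0_def by auto
  have N0: "0 \<le> N" using N1 by simp
  have Gb: "\<bar>det2 \<sigma>0 (\<sigma> (x t))\<bar> \<le> 7 * N^4 * \<delta>" if t: "t \<in> {0..\<delta>}" for t
  proof -
    define v where "v = x t - x0"
    obtain \<theta> where \<theta>: "\<theta> \<in> {0<..<1}"
      "det2 \<sigma>0 (\<sigma> (x0 + v)) - det2 \<sigma>0 (\<sigma> x0) = det2 \<sigma>0 (frechet_derivative \<sigma> (at (x0 + \<theta> *\<^sub>R v)) v)"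
      using mvt_det2[OF dsig, of \<sigma>0 x0 v] by blast
    define \<xi> where "\<xi> = x0 + \<theta> *\<^sub>R v"
    have vr: "norm v \<le> \<rho>" unfolding v_def using xr[OF t] .
    have "norm (\<xi> - x0) = \<theta> * norm v" unfolding \<xi>_def using \<theta>(1) by simp
    also have "\<dots> \<le> 1 * norm v" using \<theta>(1) by (intro mult_right_mono) auto
    finally have \<xi>r: "norm (\<xi> - x0) \<le> \<rho>" using vr by simp
    have \<xi>B: "\<xi> \<in> ball x0 1" using \<xi>r \<rho>1 by (simp add: dist_norm norm_minus_commute)
    have eq: "det2 \<sigma>0 (\<sigma> (x t)) = det2 \<sigma>0 (Ds \<xi> v)"
      using \<theta>(2) unfolding v_def \<xi>_def Ds_def \<sigma>0_def by (simp add: det2_simps)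
    interpret Lx: bounded_linear "Ds \<xi>" by (rule Dsl)
    have bl: "bounded_linear (\<lambda>u. det2 \<sigma>0 (Ds \<xi> u))"
      by (rule bounded_linear_compose[OF det2_bl Dsl])
    have "norm (det2 \<sigma>0 (Ds \<xi> v)) \<le> (3 * N^3 * \<rho>) * (sd * m) + N^3 * t"
    proof (rule int_bound[OF solf[OF t, folded v_def] bl _ absit[OF t] aintt[OF t]])
      fix s assume s: "s \<in> {0..t}"
      then have s\<delta>: "s \<in> {0..\<delta>}" using t by auto
      have xsB: "x s \<in> ball x0 1" using xB[OF s\<delta>] .
      have xsr: "norm (x s - x0) \<le> \<rho>" using xr[OF s\<delta>] .
      have lin: "Ds \<xi> (f s) = \<phi> s *\<^sub>R Ds \<xi> (\<sigma> (x s)) + Ds \<xi> (b (x s))"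
        unfolding f_def by (simp add: Lx.add Lx.scaleR)
      have spl: "Ds \<xi> (\<sigma> (x s)) = \<kappa> \<xi> *\<^sub>R \<sigma> \<xi> + Ds \<xi> (\<sigma> (x s) - \<sigma> \<xi>)"
        using kap1(1)[OF \<xi>B] by (simp add: Lx.diff)
      have k1: "\<bar>det2 \<sigma>0 (\<kappa> \<xi> *\<^sub>R \<sigma> \<xi>)\<bar> \<le> N^3 * \<rho>"
      proof -
        have "det2 \<sigma>0 (\<kappa> \<xi> *\<^sub>R \<sigma> \<xi>) = \<kappa> \<xi> * det2 \<sigma>0 (\<sigma> \<xi> - \<sigma>0)" by (simp add: det2_simps)
        then have "\<bar>det2 \<sigma>0 (\<kappa> \<xi> *\<^sub>R \<sigma> \<xi>)\<bar> = \<bar>\<kappa> \<xi>\<bar> * \<bar>det2 \<sigma>0 (\<sigma> \<xi> - \<sigma>0)\<bar>" by (simp add: abs_mult)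
        also have "\<dots> \<le> N * (N * (N * \<rho>))"
        proof (intro mult_mono)
          show "\<bar>\<kappa> \<xi>\<bar> \<le> N" using kap1(2)[OF \<xi>B] .
          have "\<bar>det2 \<sigma>0 (\<sigma> \<xi> - \<sigma>0)\<bar> \<le> norm \<sigma>0 * norm (\<sigma> \<xi> - \<sigma>0)" by (rule det2_bound)
          also have "\<dots> \<le> N * (N * norm (\<xi> - x0))"
            using s0N lip_s[OF \<xi>B x0B] N0 unfolding \<sigma>0_def by (intro mult_mono) auto
          also have "\<dots> \<le> N * (N * \<rho>)" using \<xi>r N0 by (intro mult_left_mono) auto
          finally show "\<bar>det2 \<sigma>0 (\<sigma> \<xi> - \<sigma>0)\<bar> \<le> N * (N * \<rho>)" .
        qed (use N0 \<rho>0 in auto)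
        finally show ?thesis by (simp add: power3_eq_cube algebra_simps)
      qed
      have k2: "\<bar>det2 \<sigma>0 (Ds \<xi> (\<sigma> (x s) - \<sigma> \<xi>))\<bar> \<le> N^3 * (2 * \<rho>)"
      proof -
        have "norm (x s - \<xi>) \<le> norm (x s - x0) + norm (\<xi> - x0)"
          using norm_triangle_ineq4[of "x s - x0" "\<xi> - x0"] by simp
        then have d2: "norm (x s - \<xi>) \<le> 2 * \<rho>" using xsr \<xi>r by linarith
        have "\<bar>det2 \<sigma>0 (Ds \<xi> (\<sigma> (x s) - \<sigma> \<xi>))\<bar> \<le> norm \<sigma>0 * norm (Ds \<xi> (\<sigma> (x s) - \<sigma> \<xi>))"
          by (rule det2_bound)
        also have "\<dots> \<le> N * (N * norm (\<sigma> (x s) - \<sigma> \<xi>))"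
          using s0N bnd_Ds[OF \<xi>B] N0 by (intro mult_mono) auto
        also have "\<dots> \<le> N * (N * (N * norm (x s - \<xi>)))"
          using lip_s[OF xsB \<xi>B] N0 by (intro mult_left_mono) auto
        also have "\<dots> \<le> N * (N * (N * (2 * \<rho>)))"
          using d2 N0 by (intro mult_left_mono) auto
        finally show ?thesis by (simp add: power3_eq_cube algebra_simps)
      qed
      have k3: "\<bar>det2 \<sigma>0 (Ds \<xi> (b (x s)))\<bar> \<le> N^3"
      proof -
        have "\<bar>det2 \<sigma>0 (Ds \<xi> (b (x s)))\<bar> \<le> norm \<sigma>0 * norm (Ds \<xi> (b (x s)))" by (rule det2_bound)
        also have "\<dots> \<le> N * (N * norm (b (x s)))" using s0N bnd_Ds[OF \<xi>B] N0 by (intro mult_mono) auto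
        also have "\<dots> \<le> N * (N * N)" using bnd_b[OF xsB] N0 by (intro mult_left_mono) auto
        finally show ?thesis by (simp add: power3_eq_cube)
      qed
      have deq: "det2 \<sigma>0 (Ds \<xi> (f s)) = \<phi> s * (det2 \<sigma>0 (\<kappa> \<xi> *\<^sub>R \<sigma> \<xi>) + det2 \<sigma>0 (Ds \<xi> (\<sigma> (x s) - \<sigma> \<xi>)))
          + det2 \<sigma>0 (Ds \<xi> (b (x s)))"
        unfolding lin spl by (simp add: det2_simps)
      have "\<bar>det2 \<sigma>0 (Ds \<xi> (f s))\<bar> \<le> \<bar>\<phi> s\<bar> * (\<bar>det2 \<sigma>0 (\<kappa> \<xi> *\<^sub>R \<sigma> \<xi>)\<bar> + \<bar>det2 \<sigma>0 (Ds \<xi> (\<sigma> (x s) - \<sigma> \<xi>))\<bar>)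
          + \<bar>det2 \<sigma>0 (Ds \<xi> (b (x s)))\<bar>"
        unfolding deq by (rule abs_helper)
      also have "\<dots> \<le> \<bar>\<phi> s\<bar> * (N^3 * \<rho> + N^3 * (2 * \<rho>)) + N^3"
        using k1 k2 k3 by (intro add_mono mult_left_mono) auto
      finally show "norm (det2 \<sigma>0 (Ds \<xi> (f s))) \<le> 3 * N^3 * \<rho> * \<bar>\<phi> s\<bar> + N^3"
        by (simp add: algebra_simps)
    qed (use N0 \<rho>0 t in auto)
    also have "\<dots> \<le> 3 * N^3 * (2 * N * \<delta>) + N^3 * \<delta>"
    proof (intro add_mono)
      show "3 * N ^ 3 * \<rho> * (sd * m) \<le> 3 * N ^ 3 * (2 * N * \<delta>)"
      proof -
        have "3 * N ^ 3 * \<rho> * (sd * m) = (3 * N ^ 3) * (\<rho> * (sd * m))" by (simp add: algebra_simps)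
        also have "\<dots> \<le> (3 * N ^ 3) * (2 * N * \<delta>)" using \<rho>sm N0 by (intro mult_left_mono) auto
        finally show ?thesis .
      qed
      show "N^3 * t \<le> N^3 * \<delta>" using t N0 by (intro mult_left_mono) auto
    qed
    also have "\<dots> = 6 * N^4 * \<delta> + N^3 * \<delta>" by (simp add: algebra_simps power_eq_if eval_nat_numeral)
    also have "\<dots> \<le> 6 * N^4 * \<delta> + N^4 * \<delta>" using NN4 d0 by (intro add_mono mult_right_mono) auto
    finally show ?thesis using eq by (simp add: algebra_simps)
  qed
  define b0 where "b0 = b x0"
  define g where "g = dirD \<sigma> b x0"
  define \<beta> where "\<beta> = bracket b \<sigma> x0"
  define \<nu> where "\<nu> = \<sigma>0 + \<delta> *\<^sub>R g"
  define w where "w = x \<delta> - (x0 + \<delta> *\<^sub>R b0)"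
  have b0N: "norm b0 \<le> N" using bnd_b x0B unfolding b0_def by auto
  have gN: "norm g \<le> N * N"
  proof -
    have "g = Ds x0 b0" unfolding g_def Ds_def b0_def using dirD_fd[OF dsig] by simp
    then have "norm g \<le> N * norm b0" using bnd_Ds[OF x0B] by simp
    also have "\<dots> \<le> N * N" using b0N N0 by (intro mult_left_mono) auto
    finally show ?thesis .
  qed
  have \<beta>N: "norm \<beta> \<le> 2 * N * N"
  proof -
    have "\<beta> = Db x0 \<sigma>0 - g" unfolding \<beta>_def bracket_def g_def Db_def \<sigma>0_def using dirD_fd[OF db] by simp
    then have "norm \<beta> \<le> norm (Db x0 \<sigma>0) + norm g" by (simp add: norm_triangle_ineq4)
    also have "\<dots> \<le> N * norm \<sigma>0 + N * N" using bnd_Db[OF x0B] gN by (intro add_mono) auto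
    also have "\<dots> \<le> N * N + N * N" using s0N N0 by (intro add_mono mult_left_mono) auto
    finally show ?thesis by simp
  qed
  have dNN: "\<delta> * (N * N) \<le> 1"
  proof -
    have "\<delta> * (N * N) = \<delta> * N^2" by (simp add: power2_eq_square)
    also have "\<dots> \<le> \<delta> * N^4" using NN4 d0 by (intro mult_left_mono) auto
    finally show ?thesis using dN1 by linarith
  qed
  have \<nu>N: "norm \<nu> \<le> 2 * N"
  proof -
    have "norm \<nu> \<le> norm \<sigma>0 + \<delta> * norm g" unfolding \<nu>_def using d0 norm_triangle_ineq[of \<sigma>0 "\<delta> *\<^sub>R g"] by simp
    also have "\<dots> \<le> N + \<delta> * (N * N)" using s0N gN d0 by (intro add_mono mult_left_mono) auto
    finally show ?thesis using dNN N1 by linarith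
  qed
  have detA: "\<Lambda> \<le> \<bar>det2 \<sigma>0 \<beta>\<bar>"
  proof -
    have "\<Lambda> \<le> lam \<sigma> b x0" using hyp by auto
    then have "\<Lambda> \<le> \<bar>det (Amat \<sigma> b x0)\<bar>" unfolding lam_def using L0 by (intro lam_det) auto
    then show ?thesis unfolding Amat_def det_cols \<sigma>0_def \<beta>_def .
  qed
  define D where "D = det2 \<nu> \<beta>"
  have DL: "\<Lambda> / 2 \<le> \<bar>D\<bar>"
  proof -
    have Dx: "D = det2 \<sigma>0 \<beta> + \<delta> * det2 g \<beta>" unfolding D_def \<nu>_def by (simp add: det2_simps)
    have "\<bar>det2 g \<beta>\<bar> \<le> norm g * norm \<beta>" by (rule det2_bound)
    also have "\<dots> \<le> (N * N) * (2 * N * N)" using gN \<beta>N by (intro mult_mono) auto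
    also have "\<dots> = 2 * N^4" by (simp add: power_eq_if eval_nat_numeral algebra_simps)
    finally have "\<delta> * \<bar>det2 g \<beta>\<bar> \<le> \<delta> * (2 * N^4)" using d0 by (intro mult_left_mono) auto
    also have "\<dots> \<le> \<Lambda> / 500" using dN by simp
    finally have "\<bar>\<delta> * det2 g \<beta>\<bar> \<le> \<Lambda> / 500" using d0 by (simp add: abs_mult)
    then show ?thesis using Dx detA L0 by linarith
  qed
  have D0: "D \<noteq> 0" using DL L0 by auto
  have pw32: "\<delta> powr (3/2) = \<delta> * sd"
  proof -
    have "\<delta> powr (3/2) = \<delta> powr (1 + 1/2)" by simp
    also have "\<dots> = \<delta> powr 1 * \<delta> powr (1/2)" by (rule powr_add)
    also have "\<dots> = \<delta> * sd" unfolding sd_def using d0 by (simp add: powr_half_sqrt)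
    finally show ?thesis .
  qed
  have Aeq: "Abar \<sigma> b \<delta> x0 = cols (sd *\<^sub>R \<nu>) ((\<delta> * sd) *\<^sub>R \<beta>)"
    unfolding Abar_def pw32 sd_def[symmetric] \<nu>_def g_def \<sigma>0_def \<beta>_def ..
  have detAb: "det (Abar \<sigma> b \<delta> x0) = \<delta> * \<delta> * D"
    unfolding Aeq det_cols D_def using sdsd by (simp add: det2_simps algebra_simps)
  have inv: "invertible (Abar \<sigma> b \<delta> x0)" using detAb D0 d0 by (simp add: invertible_det_nz)
  define uu where "uu = sd *\<^sub>R \<nu>"
  define vv where "vv = (\<delta> * sd) *\<^sub>R \<beta>"
  have dUV: "det2 uu vv = \<delta> * \<delta> * D" using detAb unfolding Aeq det_cols uu_def vv_def .
  have dUV0: "det2 uu vv \<noteq> 0" using dUV D0 d0 by simp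
  define c1 where "c1 = det2 w vv / det2 uu vv"
  define c2 where "c2 = det2 uu w / det2 uu vv"
  have Ac: "Abar \<sigma> b \<delta> x0 *v vector [c1, c2] = w"
    unfolding Aeq uu_def[symmetric] vv_def[symmetric] c1_def c2_def by (rule cramer2[OF dUV0])
  have An: "Anorm w (Abar \<sigma> b \<delta> x0) \<le> \<bar>c1\<bar> + \<bar>c2\<bar>"
    unfolding Anorm_def matrix_inv_apply[OF inv Ac] using norm_le_l1_cart[of "vector [c1, c2] :: real^2"]
    by (simp add: sum_2)
  have sdne: "sd \<noteq> 0" using sd0 by simp
  have c1e: "c1 = det2 w \<beta> / (sd * D)"
    unfolding c1_def dUV unfolding vv_def using sdne D0 by (simp add: det2_simps sdsd[symmetric] field_simps)
  have c2e: "c2 = det2 \<nu> w / (\<delta> * sd * D)"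
    unfolding c2_def dUV unfolding uu_def using sdne D0 by (simp add: det2_simps sdsd[symmetric] field_simps)
  have wint: "((\<lambda>s. f s - b0) has_integral w) {0..\<delta>}"
  proof -
    have "((\<lambda>s. f s - b0) has_integral ((x \<delta> - x0) - \<delta> *\<^sub>R b0)) {0..\<delta>}"
      using has_integral_diff[OF solf[of \<delta>] has_integral_const_real[of b0 0 \<delta>]] d0 by (simp add: content_real)
    then show ?thesis unfolding w_def by (simp add: algebra_simps)
  qed
  have fb0: "f s - b0 = \<phi> s *\<^sub>R \<sigma> (x s) + (b (x s) - b0)" for s unfolding f_def by simp
  have bdiff: "norm (b (x s) - b0) \<le> N * \<rho>" if "s \<in> {0..\<delta>}" for s
  proof -
    have "norm (b (x s) - b0) \<le> N * norm (x s - x0)" unfolding b0_def using lip_b[OF xB[OF that] x0B] .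
    also have "\<dots> \<le> N * \<rho>" using xr[OF that] N0 by (intro mult_left_mono) auto
    finally show ?thesis .
  qed
  have wN: "norm w \<le> 2 * N * (sd * m)"
  proof -
    have "norm w \<le> N * (sd * m) + (N * \<rho>) * \<delta>"
    proof (rule int_bound[OF wint bounded_linear_ident _ absi aint])
      fix s assume s: "s \<in> {0..\<delta>}"
      have "norm (\<phi> s *\<^sub>R \<sigma> (x s) + (b (x s) - b0)) \<le> \<bar>\<phi> s\<bar> * norm (\<sigma> (x s)) + norm (b (x s) - b0)"
        by (metis norm_scaleR norm_triangle_ineq real_norm_def)
      also have "\<dots> \<le> \<bar>\<phi> s\<bar> * N + N * \<rho>"
        using bnd_s[OF xB[OF s]] bdiff[OF s] by (intro add_mono mult_left_mono) auto
      finally show "norm (f s - b0) \<le> N * \<bar>\<phi> s\<bar> + N * \<rho>" unfolding fb0 by (simp add: mult.commute)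
    qed (use N0 d0 aint in auto)
    also have "\<dots> \<le> N * (sd * m) + N * (sd * m)"
    proof -
      have "(N * \<rho>) * \<delta> = N * (\<rho> * \<delta>)" by simp
      also have "\<dots> \<le> N * (sd * m)" using \<rho>d N0 by (intro mult_left_mono) auto
      finally have "(N * \<rho>) * \<delta> \<le> N * (sd * m)" .
      then show ?thesis by linarith
    qed
    finally show ?thesis by (simp add: algebra_simps)
  qed
  have SM: "0 \<le> sd * m" using sd0 m0 by simp
  have c1b: "\<bar>c1\<bar> \<le> 8 * N^3 * m / \<Lambda>"
  proof -
    have "\<bar>det2 w \<beta>\<bar> \<le> norm w * norm \<beta>" by (rule det2_bound)
    also have "\<dots> \<le> (2 * N * (sd * m)) * (2 * N * N)" using wN \<beta>N N0 sd0 m0 by (intro mult_mono) (auto intro!: mult_nonneg_nonneg)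
    also have "\<dots> = 4 * N^3 * (sd * m)" by (simp add: power3_eq_cube algebra_simps)
    finally have nb1: "\<bar>det2 w \<beta>\<bar> \<le> 4 * N^3 * (sd * m)" .
    have "\<bar>c1\<bar> = \<bar>det2 w \<beta>\<bar> / (sd * \<bar>D\<bar>)" unfolding c1e using sd0 by (simp add: abs_mult)
    also have "\<dots> \<le> (4 * N^3 * (sd * m)) / (sd * (\<Lambda> / 2))"
      using nb1 DL sd0 L0 N0 SM by (intro frac_le mult_left_mono) auto
    also have "\<dots> = 8 * N^3 * m / \<Lambda>" using sd0 L0 by (simp add: field_simps)
    finally show ?thesis .
  qed
  have dnw: "\<bar>det2 \<nu> w\<bar> \<le> (8 * N^4 * \<delta>) * (sd * m) + (2 * N * (N * \<rho>)) * \<delta>"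
  proof (rule int_bound[OF wint det2_bl _ absi aint, simplified real_norm_def])
    fix s assume s: "s \<in> {0..\<delta>}"
    have e1: "det2 \<nu> (f s - b0) = \<phi> s * (det2 \<sigma>0 (\<sigma> (x s)) + \<delta> * det2 g (\<sigma> (x s))) + det2 \<nu> (b (x s) - b0)"
      unfolding fb0 \<nu>_def by (simp add: det2_simps algebra_simps)
    have t1: "\<bar>det2 \<sigma>0 (\<sigma> (x s))\<bar> \<le> 7 * N^4 * \<delta>" by (rule Gb[OF s])
    have t2: "\<bar>\<delta> * det2 g (\<sigma> (x s))\<bar> \<le> N^4 * \<delta>"
    proof -
      have "\<bar>det2 g (\<sigma> (x s))\<bar> \<le> norm g * norm (\<sigma> (x s))" by (rule det2_bound)
      also have "\<dots> \<le> (N * N) * N" using gN bnd_s[OF xB[OF s]] N0 by (intro mult_mono) auto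
      also have "\<dots> \<le> N^4" using NN4 by (simp add: power3_eq_cube)
      finally have "\<delta> * \<bar>det2 g (\<sigma> (x s))\<bar> \<le> \<delta> * N^4" using d0 by (intro mult_left_mono) auto
      then show ?thesis using d0 by (simp add: abs_mult mult.commute)
    qed
    have t3: "\<bar>det2 \<nu> (b (x s) - b0)\<bar> \<le> 2 * N * (N * \<rho>)"
    proof -
      have "\<bar>det2 \<nu> (b (x s) - b0)\<bar> \<le> norm \<nu> * norm (b (x s) - b0)" by (rule det2_bound)
      also have "\<dots> \<le> (2 * N) * (N * \<rho>)" using \<nu>N bdiff[OF s] N0 by (intro mult_mono) auto
      finally show ?thesis .
    qed
    have "\<bar>det2 \<nu> (f s - b0)\<bar> \<le> \<bar>\<phi> s\<bar> * (\<bar>det2 \<sigma>0 (\<sigma> (x s))\<bar> + \<bar>\<delta> * det2 g (\<sigma> (x s))\<bar>) + \<bar>det2 \<nu> (b (x s) - b0)\<bar>"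
      unfolding e1 by (rule abs_helper)
    also have "\<dots> \<le> \<bar>\<phi> s\<bar> * (7 * N^4 * \<delta> + N^4 * \<delta>) + 2 * N * (N * \<rho>)"
      using t1 t2 t3 by (intro add_mono mult_left_mono) auto
    finally show "\<bar>det2 \<nu> (f s - b0)\<bar> \<le> 8 * N^4 * \<delta> * \<bar>\<phi> s\<bar> + 2 * N * (N * \<rho>)"
      by (simp add: algebra_simps)
  qed (use N0 d0 in auto)
  have dnw2: "\<bar>det2 \<nu> w\<bar> \<le> 12 * N^4 * \<delta> * (sd * m)"
  proof -
    have "(2 * N * (N * \<rho>)) * \<delta> = 4 * N^3 * \<delta> * (sd * m)" unfolding \<rho>_def by (simp add: power3_eq_cube algebra_simps)
    also have "\<dots> \<le> 4 * N^4 * \<delta> * (sd * m)" using NN4 d0 SM by (intro mult_right_mono) auto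
    finally show ?thesis using dnw by (simp add: algebra_simps)
  qed
  have c2b: "\<bar>c2\<bar> \<le> 24 * N^4 * m / \<Lambda>"
  proof -
    have "\<bar>c2\<bar> = \<bar>det2 \<nu> w\<bar> / (\<delta> * sd * \<bar>D\<bar>)" unfolding c2e using sd0 d0 by (simp add: abs_mult)
    also have "\<dots> \<le> (12 * N^4 * \<delta> * (sd * m)) / (\<delta> * sd * (\<Lambda> / 2))"
      using dnw2 DL sd0 d0 L0 N0 SM by (intro frac_le mult_left_mono) auto
    also have "\<dots> = 24 * N^4 * m / \<Lambda>" using sd0 d0 L0 by (simp add: field_simps)
    finally show ?thesis .
  qed
  have fin1: "\<bar>c1\<bar> + \<bar>c2\<bar> \<le> 32 * (N^4 / \<Lambda>) * m"
  proof -
    have "8 * N^3 * m / \<Lambda> \<le> 8 * N^4 * m / \<Lambda>"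
      using NN4 m0 L0 by (intro divide_right_mono mult_right_mono) auto
    moreover have "8 * N^4 * m / \<Lambda> + 24 * N^4 * m / \<Lambda> = 32 * (N^4 / \<Lambda>) * m"
      using L0 by (simp add: field_simps)
    ultimately show ?thesis using c1b c2b by linarith
  qed
  also have "\<dots> \<le> 1000 * P * m"
  proof -
    have "32 * (N^4 / \<Lambda>) \<le> 32 * P" using PN by (intro mult_left_mono) auto
    then have "32 * (N^4 / \<Lambda>) \<le> 1000 * P" using P1 by linarith
    then show ?thesis using m0 by (intro mult_right_mono) auto
  qed
  finally have "Anorm w (Abar \<sigma> b \<delta> x0) \<le> 1000 * P * m" using An by simp
  then show ?thesis using inv unfolding w_def b0_def P m_def e_def sd_def by simp
qed

theorem lemmaA5:
  shows "\<exists>K q :: real. K \<ge> 1 \<and> q \<ge> 1 \<and>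
    (\<forall>(\<sigma> :: real^2 \<Rightarrow> real^2) (b :: real^2 \<Rightarrow> real^2) (x0 :: real^2) (\<Lambda> :: real) (N :: real)
        (\<kappa> :: real^2 \<Rightarrow> real).
      Ck 3 \<sigma> \<and> Ck 3 b \<and> 0 < \<Lambda> \<and> \<Lambda> \<le> 1 \<and> N \<ge> 1 \<and>
      (\<forall>z. dist z x0 < 1 \<longrightarrow> lam \<sigma> b z \<ge> \<Lambda> \<and> nfun b \<sigma> z \<le> N) \<and>
      (\<forall>z. \<kappa> differentiable (at z)) \<and>
      (\<forall>z. dist z x0 < 1 \<longrightarrow> dirD \<sigma> \<sigma> z = \<kappa> z *\<^sub>R \<sigma> z \<and>
           \<bar>\<kappa> z\<bar> \<le> nfun b \<sigma> z \<and> norm (grad \<kappa> z) \<le> nfun b \<sigma> z)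
      \<longrightarrow>
      (\<forall>(\<delta> :: real) (\<phi> :: real \<Rightarrow> real) (x :: real \<Rightarrow> real^2).
         0 < \<delta> \<and> \<delta> \<le> 1 / (K * (N / \<Lambda>) powr q) \<and>
         set_borel_measurable lborel {0..\<delta>} \<phi> \<and>
         (\<lambda>s. (\<phi> s)\<^sup>2) integrable_on {0..\<delta>} \<and>
         sqrt (integral {0..\<delta>} (\<lambda>s. (\<phi> s)\<^sup>2)) \<le> 1 / (K * (N / \<Lambda>) powr q) \<and>
         (\<forall>t\<in>{0..\<delta>}. ((\<lambda>s. \<phi> s *\<^sub>R \<sigma> (x s) + b (x s)) has_integral (x t - x0)) {0..t})
         \<longrightarrow>
         invertible (Abar \<sigma> b \<delta> x0) \<and>
         Anorm (x \<delta> - (x0 + \<delta> *\<^sub>R b x0)) (Abar \<sigma> b \<delta> x0)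
           \<le> K * (N / \<Lambda>) powr q * max (sqrt (integral {0..\<delta>} (\<lambda>s. (\<phi> s)\<^sup>2))) (sqrt \<delta>)))"
  apply (rule exI[of _ 1000], rule exI[of _ 4])
  apply (intro conjI)
    apply simp
   apply simp
  apply (intro allI impI)
  apply (elim conjE)
  apply (rule main_est; assumption)
  done

end
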